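(* In the entry–exit model described in the context (under all its standing assumptions (A1)–(A8)), let $v^*$ be the unique fixed point in $\mathscr C$ of the Bellman operator $(Tv)(\phi,p)=\pi(\phi,p)+\beta\max\{0,\int v(\phi',p)\Gamma(\phi,\mathrm d\phi')\}$. Then there exists a unique price $p^*>0$ such that $$\int v^*(\phi,p^* )\,\gamma(\mathrm d\phi)=c_e.$$
   Context: Let $\mathbb R_+=[0,\infty)$ and let $\mathscr B$ denote its Borel sets; integrals are over $\mathbb R_+$. "Increasing" for functions on $\mathbb R_+^2$ refers to the componentwise order. Standing assumptions: (A1) A demand function $D$ on $\mathbb R_+$ is continuous and strictly decreasing with $D(0)=\infty$ and $\lim_{p\to\infty}D(p)=0$. (A2) Profit $\pi(\phi,p)$ and output $q(\phi,p)$ are functions of productivity $\phi\ge 0$ and price $p\ge0$; both are continuous and strictly increasing on $\mathbb R_+^2$; $q\ge 0$; and $\pi(\phi,p)<0$ if $\phi=0$ or $p=0$. (A3) $\Gamma$ is a Markov transition kernel on $\mathbb R_+$ which is monotone increasing (i.e. $\phi\mapsto\Gamma(\phi,[0,a])$ is decreasing for every $a\ge0$); $\Gamma^n$ denotes its $n$-step kernel. Moreover (a) for each $a>0$ and $\phi\ge0$ there is $n\in\mathbb N$ with $\Gamma^n(\phi,[0,a))>0$; (b) for each $p>0$ there exists $\phi\ge0$ with $\int \pi(\phi',p)\Gamma(\phi,\mathrm d\phi')\ge 0$. $\beta=1/(1+r)$ for a fixed $r>0$. (A4) $\gamma$ is a Borel probability measure on $\mathbb R_+$ with $\int q(\phi,p)\gamma(\mathrm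 d\phi)<\infty$ for all $p$ and $\gamma([0,a])>0$ for all $a>0$; $c_e>0$ is a fixed entry cost. (A5) There exists $p>0$ with $\int \pi(\phi,p)\gamma(\mathrm d\phi)\ge c_e$. (A6) For every $p$, $\sum_{t\ge0}\beta^t\int \pi(\phi',p)\Gamma^t(0,\mathrm d\phi')\le 0$. (A7) Let $\{\phi_t\}$ be the process with $\phi_0\sim\gamma$ and $\phi_{t+1}\sim\Gamma(\phi_t,\cdot)$. There is $\delta\in(\beta,1)$ with $\sum_{t\ge0}\delta^t\,\mathbb E\,\pi(\phi_t,p)<\infty$ for all $p\ge0$. Fix a constant $b$ with $\pi+b\ge1$ and set $\kappa(\phi,p):=\sum_{t\ge0}\delta^t\mathbb E_\phi[\pi(\phi_t,p)+b]$, where under $\mathbb E_\phi$ the process starts at $\phi_0=\phi$ and evolves via $\Gamma$; $\kappa$ is assumed finite everywhere. For $f$ on $\mathbb R_+^2$ let $\|f\|_\kappa:=\sup|f/\kappa|$. Let $\mathscr C$ be the set of continuous, increasing functions $f$ on $\mathbb R_+^2$ with $\|f\|_\kappa<\infty$, with metric $d(v,w):=\|w-v\|_\kappa$; the Bellman operator is a contraction on $(\mathscr C,d)$, so $v^*$ is well defined. (A8) For every $u\in\mathscr C$, the map $(\phi,p)\mapsto\int u(\phi',p)\Gamma(\phi,\mathrm d\phi')$ is continuous. *)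

theory Defs
  imports "HOL-Probability.Probability"
begin

definition Sp :: "real measure" where
  "Sp = restrict_space borel {0..}"

fun kpow :: "(real \<Rightarrow> real measure) \<Rightarrow> nat \<Rightarrow> real \<Rightarrow> real measure" where
  "kpow \<Gamma> 0 = (\<lambda>\<phi>. return Sp \<phi>)"
| "kpow \<Gamma> (Suc n) = (\<lambda>\<phi>. bind (kpow \<Gamma> n \<phi>) \<Gamma>)"

definition incr2 :: "(real \<Rightarrow> real \<Rightarrow> real) \<Rightarrow> bool" where
  "incr2 f \<longleftrightarrow> (\<forall>x y x' y'. 0 \<le> x \<and> x \<le> x' \<and> 0 \<le> y \<and> y \<le> y' \<longrightarrow> f x y \<le> f x' y')"

definition strict_incr2 :: "(real \<Rightarrow> real \<Rightarrow> real) \<Rightarrow> bool" where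
  "strict_incr2 f \<longleftrightarrow> (\<forall>x y x' y'. 0 \<le> x \<and> x \<le> x' \<and> 0 \<le> y \<and> y \<le> y' \<and> (x, y) \<noteq> (x', y')
      \<longrightarrow> f x y < f x' y')"

definition kappa :: "(real \<Rightarrow> real measure) \<Rightarrow> (real \<Rightarrow> real \<Rightarrow> real) \<Rightarrow> real \<Rightarrow> real
    \<Rightarrow> real \<Rightarrow> real \<Rightarrow> real" where
  "kappa \<Gamma> \<pi> b \<delta> \<phi> p = (\<Sum>t. \<delta> ^ t * (\<integral>\<phi>'. (\<pi> \<phi>' p + b) \<partial>(kpow \<Gamma> t \<phi>)))"

definition Cspace :: "(real \<Rightarrow> real measure) \<Rightarrow> (real \<Rightarrow> real \<Rightarrow> real) \<Rightarrow> real \<Rightarrow> real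
    \<Rightarrow> (real \<Rightarrow> real \<Rightarrow> real) set" where
  "Cspace \<Gamma> \<pi> b \<delta> = {f. continuous_on ({0..} \<times> {0..}) (\<lambda>(x, y). f x y) \<and> incr2 f \<and>
      (\<exists>M. \<forall>\<phi>\<ge>0. \<forall>p\<ge>0. \<bar>f \<phi> p\<bar> \<le> M * kappa \<Gamma> \<pi> b \<delta> \<phi> p)}"

definition bellman :: "(real \<Rightarrow> real measure) \<Rightarrow> (real \<Rightarrow> real \<Rightarrow> real) \<Rightarrow> real
    \<Rightarrow> (real \<Rightarrow> real \<Rightarrow> real) \<Rightarrow> real \<Rightarrow> real \<Rightarrow> real" where
  "bellman \<Gamma> \<pi> \<beta> v \<phi> p = \<pi> \<phi> p + \<beta> * max 0 (\<integral>\<phi>'. v \<phi>' p \<partial>(\<Gamma> \<phi>))"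

end

theory Submission
  imports Defs
begin


lemma space_Sp: "space Sp = {0..}" by (simp add: Sp_def space_restrict_space)

lemma cont_meas_Sp: "continuous_on {0..} f \<Longrightarrow> f \<in> borel_measurable Sp"
  unfolding Sp_def by (rule borel_measurable_continuous_on_restrict)

lemma cont_slice:
  fixes f :: "real \<Rightarrow> real \<Rightarrow> 'b::topological_space"
  assumes "continuous_on ({0..} \<times> {0..}) (\<lambda>(x, y). f x y)" "(0::real) \<le> p"
  shows "continuous_on {0..} (\<lambda>x. f x p)"
proof -
  have "continuous_on {0..} ((\<lambda>(x, y). f x y) \<circ> (\<lambda>x::real. (x, p)))"
    by (rule continuous_on_compose[OF continuous_on_Pair[OF continuous_on_id continuous_on_const]])
       (rule continuous_on_subset[OF assms(1)], use assms(2) in auto)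
  then show ?thesis by (simp add: o_def)
qed

lemma kpow_meas: "\<Gamma> \<in> Sp \<rightarrow>\<^sub>M prob_algebra Sp \<Longrightarrow> kpow \<Gamma> t \<in> Sp \<rightarrow>\<^sub>M prob_algebra Sp"
proof (induction t)
  case 0 then show ?case using measurable_return_prob_space[of Sp] by (simp add: fun_eq_iff)
next
  case (Suc t) then show ?case by (simp add: measurable_bind_prob_space)
qed

lemma kpow_Suc':
  assumes G: "\<Gamma> \<in> Sp \<rightarrow>\<^sub>M prob_algebra Sp" and x: "x \<in> space Sp"
  shows "kpow \<Gamma> (Suc t) x = bind (\<Gamma> x) (kpow \<Gamma> t)"
  using x
proof (induction t arbitrary: x)
  case 0
  have "sets (\<Gamma> x) = sets Sp" using measurable_space[OF G 0] by (simp add: space_prob_algebra)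
  then show ?case using bind_return[OF measurable_prob_algebraD[OF G] 0] bind_return''[of "\<Gamma> x" Sp]
    by (simp add: fun_eq_iff)
next
  case (Suc t)
  have "kpow \<Gamma> (Suc (Suc t)) x = bind (kpow \<Gamma> (Suc t) x) \<Gamma>" by simp
  also have "\<dots> = bind (bind (\<Gamma> x) (kpow \<Gamma> t)) \<Gamma>" using Suc by simp
  also have "\<dots> = bind (\<Gamma> x) (\<lambda>y. bind (kpow \<Gamma> t y) \<Gamma>)"
    apply (rule bind_assoc[where N=Sp and R=Sp])
    using measurable_prob_algebraD[OF kpow_meas[OF G]] measurable_prob_algebraD[OF G]
      measurable_space[OF G Suc.prems]
    by (auto simp: space_prob_algebra cong: measurable_cong_sets)
  finally show ?case by simp
qed



locale kset =
  fixes \<Gamma> :: "real \<Rightarrow> real measure" and \<pi> :: "real \<Rightarrow> real \<Rightarrow> real" and b \<delta> :: real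
  assumes kern: "\<Gamma> \<in> Sp \<rightarrow>\<^sub>M prob_algebra Sp"
    and pic: "continuous_on ({0..} \<times> {0..}) (\<lambda>(x, y). \<pi> x y)"
    and bb: "\<And>\<phi> p. 0 \<le> \<phi> \<Longrightarrow> 0 \<le> p \<Longrightarrow> \<pi> \<phi> p + b \<ge> 1"
    and ki: "\<And>\<phi> p t. 0 \<le> \<phi> \<Longrightarrow> 0 \<le> p \<Longrightarrow> integrable (kpow \<Gamma> t \<phi>) (\<lambda>\<phi>'. \<pi> \<phi>' p)"
    and kf: "\<And>\<phi> p. 0 \<le> \<phi> \<Longrightarrow> 0 \<le> p \<Longrightarrow>
                   summable (\<lambda>t. \<delta> ^ t * (\<integral>\<phi>'. (\<pi> \<phi>' p + b) \<partial>(kpow \<Gamma> t \<phi>)))"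
    and d0: "0 < \<delta>"
begin

definition K :: "real \<Rightarrow> real \<Rightarrow> ennreal" where
  "K p \<phi> = (\<Sum>t. ennreal (\<delta> ^ t) * (\<integral>\<^sup>+\<phi>'. ennreal (\<pi> \<phi>' p + b) \<partial>kpow \<Gamma> t \<phi>))"

lemma kp_space: "\<phi> \<in> space Sp \<Longrightarrow> kpow \<Gamma> t \<phi> \<in> space (prob_algebra Sp)"
  using measurable_space[OF kpow_meas[OF kern]] by blast

lemma kp_sets: "\<phi> \<in> space Sp \<Longrightarrow> sets (kpow \<Gamma> t \<phi>) = sets Sp"
  using kp_space by (simp add: space_prob_algebra)

lemma kp_prob: "\<phi> \<in> space Sp \<Longrightarrow> prob_space (kpow \<Gamma> t \<phi>)"
  using kp_space by (simp add: space_prob_algebra)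

lemma kp_spc: "\<phi> \<in> space Sp \<Longrightarrow> space (kpow \<Gamma> t \<phi>) = {0..}"
  using kp_sets sets_eq_imp_space_eq space_Sp by metis

lemma pi_meas: "0 \<le> p \<Longrightarrow> (\<lambda>x. \<pi> x p) \<in> borel_measurable Sp"
  by (rule cont_meas_Sp, rule cont_slice[OF pic])

lemma f_meas: "0 \<le> p \<Longrightarrow> (\<lambda>x. ennreal (\<pi> x p + b)) \<in> borel_measurable Sp"
  using pi_meas by measurable

lemma term_eq:
  assumes "0 \<le> \<phi>" "0 \<le> p"
  shows "(\<integral>\<^sup>+\<phi>'. ennreal (\<pi> \<phi>' p + b) \<partial>kpow \<Gamma> t \<phi>) = ennreal (\<integral>\<phi>'. (\<pi> \<phi>' p + b) \<partial>kpow \<Gamma> t \<phi>)"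
proof (rule nn_integral_eq_integral)
  interpret prob_space "kpow \<Gamma> t \<phi>" using kp_prob assms space_Sp by auto
  show "integrable (kpow \<Gamma> t \<phi>) (\<lambda>\<phi>'. \<pi> \<phi>' p + b)"
    using ki[OF assms] by simp
  show "AE x in kpow \<Gamma> t \<phi>. 0 \<le> \<pi> x p + b"
    using kp_spc[of \<phi> t] assms space_Sp bb
    by (intro AE_I2) (smt (verit, ccfv_threshold) atLeast_iff)
qed

lemma term_nonneg:
  assumes "0 \<le> \<phi>" "0 \<le> p"
  shows "0 \<le> (\<integral>\<phi>'. (\<pi> \<phi>' p + b) \<partial>kpow \<Gamma> t \<phi>)"
  using kp_spc[of \<phi> t] assms space_Sp bb
  by (intro integral_nonneg_AE AE_I2) (smt (verit, ccfv_threshold) atLeast_iff)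

lemma K_eq:
  assumes "0 \<le> \<phi>" "0 \<le> p"
  shows "K p \<phi> = ennreal (kappa \<Gamma> \<pi> b \<delta> \<phi> p)"
proof -
  have "K p \<phi> = (\<Sum>t. ennreal (\<delta> ^ t * (\<integral>\<phi>'. (\<pi> \<phi>' p + b) \<partial>kpow \<Gamma> t \<phi>)))"
    unfolding K_def using term_eq[OF assms] d0 by (simp add: ennreal_mult term_nonneg[OF assms])
  also have "\<dots> = ennreal (\<Sum>t. \<delta> ^ t * (\<integral>\<phi>'. (\<pi> \<phi>' p + b) \<partial>kpow \<Gamma> t \<phi>))"
    using kf[OF assms] term_nonneg[OF assms] d0
    by (intro suminf_ennreal2) auto
  finally show ?thesis unfolding kappa_def .
qed

lemma kappa_nonneg:
  assumes "0 \<le> \<phi>" "0 \<le> p"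
  shows "0 \<le> kappa \<Gamma> \<pi> b \<delta> \<phi> p"
  unfolding kappa_def using kf[OF assms] term_nonneg[OF assms] d0
  by (intro suminf_nonneg) auto

lemma F_meas: "0 \<le> p \<Longrightarrow> (\<lambda>\<phi>. \<integral>\<^sup>+\<phi>'. ennreal (\<pi> \<phi>' p + b) \<partial>kpow \<Gamma> t \<phi>) \<in> borel_measurable Sp"
  using measurable_compose[OF measurable_prob_algebraD[OF kpow_meas[OF kern]]
      nn_integral_measurable_subprob_algebra[OF f_meas]] by (simp add: o_def)

lemma K_meas: "0 \<le> p \<Longrightarrow> K p \<in> borel_measurable Sp"
  unfolding K_def[abs_def] using F_meas by measurable


lemma ennreal_shift_le: "(\<Sum>n. g (Suc n)) \<le> (\<Sum>n. g n :: ennreal)"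
proof -
  have "g sums ((\<Sum>n. g (Suc n)) + g 0)"
    by (rule sums_Suc) (rule summable_sums, simp)
  then have "(\<Sum>n. g n) = (\<Sum>n. g (Suc n)) + g 0" by (metis sums_unique)
  then show ?thesis by simp
qed

lemma Gam_space: "\<phi> \<in> space Sp \<Longrightarrow> \<Gamma> \<phi> \<in> space (prob_algebra Sp)"
  using measurable_space[OF kern] by blast

lemma Gam_sets: "\<phi> \<in> space Sp \<Longrightarrow> sets (\<Gamma> \<phi>) = sets Sp"
  using Gam_space by (simp add: space_prob_algebra)

lemma K_Gamma:
  assumes x: "\<phi> \<in> space Sp" and p: "0 \<le> p"
  shows "ennreal \<delta> * (\<integral>\<^sup>+x. K p x \<partial>\<Gamma> \<phi>) \<le> K p \<phi>"
proof -
  let ?f = "\<lambda>\<phi>'. ennreal (\<pi> \<phi>' p + b)"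
  let ?G = "\<lambda>t. \<integral>\<^sup>+\<phi>'. ?f \<phi>' \<partial>kpow \<Gamma> t \<phi>"
  have sG: "sets (\<Gamma> \<phi>) = sets Sp" by (rule Gam_sets[OF x])
  have Fm: "\<And>t. (\<lambda>y. ennreal (\<delta> ^ t) * (\<integral>\<^sup>+\<phi>'. ?f \<phi>' \<partial>kpow \<Gamma> t y)) \<in> borel_measurable (\<Gamma> \<phi>)"
    using F_meas[OF p] by (simp add: measurable_cong_sets[OF sG refl])
  have Fm2: "\<And>t. (\<lambda>y. (\<integral>\<^sup>+\<phi>'. ?f \<phi>' \<partial>kpow \<Gamma> t y)) \<in> borel_measurable (\<Gamma> \<phi>)"
    using F_meas[OF p] by (simp add: measurable_cong_sets[OF sG refl])
  have km: "kpow \<Gamma> t \<in> \<Gamma> \<phi> \<rightarrow>\<^sub>M subprob_algebra Sp" for t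
    using measurable_prob_algebraD[OF kpow_meas[OF kern]] by (simp add: measurable_cong_sets[OF sG refl])
  have "(\<integral>\<^sup>+x. K p x \<partial>\<Gamma> \<phi>) = (\<Sum>t. \<integral>\<^sup>+y. ennreal (\<delta> ^ t) * (\<integral>\<^sup>+\<phi>'. ?f \<phi>' \<partial>kpow \<Gamma> t y) \<partial>\<Gamma> \<phi>)"
    unfolding K_def by (rule nn_integral_suminf[OF Fm])
  also have "\<dots> = (\<Sum>t. ennreal (\<delta> ^ t) * \<integral>\<^sup>+y. (\<integral>\<^sup>+\<phi>'. ?f \<phi>' \<partial>kpow \<Gamma> t y) \<partial>\<Gamma> \<phi>)"
    by (intro suminf_cong nn_integral_cmult Fm2)
  also have "\<dots> = (\<Sum>t. ennreal (\<delta> ^ t) * ?G (Suc t))"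
  proof (intro suminf_cong arg_cong2[where f="(*)"] refl)
    fix t
    have "?G (Suc t) = (\<integral>\<^sup>+\<phi>'. ?f \<phi>' \<partial>bind (\<Gamma> \<phi>) (kpow \<Gamma> t))"
      using kpow_Suc'[OF kern x] by simp
    also have "\<dots> = \<integral>\<^sup>+y. (\<integral>\<^sup>+\<phi>'. ?f \<phi>' \<partial>kpow \<Gamma> t y) \<partial>\<Gamma> \<phi>"
      by (rule nn_integral_bind[OF f_meas[OF p] km])
    finally show "\<integral>\<^sup>+y. (\<integral>\<^sup>+\<phi>'. ?f \<phi>' \<partial>kpow \<Gamma> t y) \<partial>\<Gamma> \<phi> = ?G (Suc t)" by simp
  qed
  finally have eq: "(\<integral>\<^sup>+x. K p x \<partial>\<Gamma> \<phi>) = (\<Sum>t. ennreal (\<delta> ^ t) * ?G (Suc t))" .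
  have "ennreal \<delta> * (\<integral>\<^sup>+x. K p x \<partial>\<Gamma> \<phi>) = (\<Sum>t. ennreal (\<delta> ^ Suc t) * ?G (Suc t))"
    unfolding eq ennreal_suminf_cmult[symmetric]
    using d0 by (intro suminf_cong) (simp add: ennreal_mult mult.assoc)
  also have "\<dots> \<le> (\<Sum>t. ennreal (\<delta> ^ t) * ?G t)"
    by (rule ennreal_shift_le[where g="\<lambda>t. ennreal (\<delta> ^ t) * ?G t"])
  finally show ?thesis unfolding K_def .
qed

lemma integrable_K:
  assumes sN: "sets N = sets Sp" and fin: "(\<integral>\<^sup>+x. K p x \<partial>N) < \<infinity>" and p: "0 \<le> p"
    and fm: "f \<in> borel_measurable Sp"
    and bd: "\<And>\<phi>. 0 \<le> \<phi> \<Longrightarrow> \<bar>f \<phi>\<bar> \<le> M * kappa \<Gamma> \<pi> b \<delta> \<phi> p"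
  shows "integrable N f"
proof (rule integrableI_bounded)
  show "f \<in> borel_measurable N" using fm by (simp add: measurable_cong_sets[OF sN refl])
  have spN: "space N = {0..}" using sets_eq_imp_space_eq[OF sN] space_Sp by simp
  have "(\<integral>\<^sup>+x. ennreal (norm (f x)) \<partial>N) \<le> (\<integral>\<^sup>+x. ennreal (max M 0) * K p x \<partial>N)"
  proof (rule nn_integral_mono)
    fix x assume "x \<in> space N"
    then have x: "0 \<le> x" using spN by auto
    have "\<bar>f x\<bar> \<le> max M 0 * kappa \<Gamma> \<pi> b \<delta> x p"
      using bd[OF x] kappa_nonneg[OF x p]
      by (smt (verit) mult_right_mono max.cobounded1)
    then have "ennreal (norm (f x)) \<le> ennreal (max M 0 * kappa \<Gamma> \<pi> b \<delta> x p)"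
      by (simp add: ennreal_leI)
    also have "\<dots> = ennreal (max M 0) * K p x"
      using K_eq[OF x p] kappa_nonneg[OF x p] by (simp add: ennreal_mult)
    finally show "ennreal (norm (f x)) \<le> ennreal (max M 0) * K p x" .
  qed
  also have "\<dots> = ennreal (max M 0) * (\<integral>\<^sup>+x. K p x \<partial>N)"
    by (rule nn_integral_cmult) (use K_meas[OF p] sN in \<open>simp add: measurable_cong_sets[OF sN refl]\<close>)
  also have "\<dots> < \<infinity>" using fin by (simp add: ennreal_mult_less_top)
  finally show "(\<integral>\<^sup>+x. ennreal (norm (f x)) \<partial>N) < \<infinity>" .
qed


lemma K_gamma:
  assumes g: "\<gamma> \<in> space (prob_algebra Sp)" and p: "0 \<le> p" and d1: "\<delta> < 1"
    and i7: "\<And>t. integrable (bind \<gamma> (kpow \<Gamma> t)) (\<lambda>\<phi>. \<pi> \<phi> p)"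
    and s7: "summable (\<lambda>t. \<delta> ^ t * (\<integral>\<phi>. \<pi> \<phi> p \<partial>(bind \<gamma> (kpow \<Gamma> t))))"
  shows "(\<integral>\<^sup>+x. K p x \<partial>\<gamma>) < \<infinity>"
proof -
  let ?f = "\<lambda>\<phi>'. ennreal (\<pi> \<phi>' p + b)"
  let ?B = "\<lambda>t. bind \<gamma> (kpow \<Gamma> t)"
  have sG: "sets \<gamma> = sets Sp" using g by (simp add: space_prob_algebra)
  have Fm: "\<And>t. (\<lambda>y. ennreal (\<delta> ^ t) * (\<integral>\<^sup>+\<phi>'. ?f \<phi>' \<partial>kpow \<Gamma> t y)) \<in> borel_measurable \<gamma>"
    using F_meas[OF p] by (simp add: measurable_cong_sets[OF sG refl])
  have Fm2: "\<And>t. (\<lambda>y. (\<integral>\<^sup>+\<phi>'. ?f \<phi>' \<partial>kpow \<Gamma> t y)) \<in> borel_measurable \<gamma>"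
    using F_meas[OF p] by (simp add: measurable_cong_sets[OF sG refl])
  have km: "kpow \<Gamma> t \<in> \<gamma> \<rightarrow>\<^sub>M subprob_algebra Sp" for t
    using measurable_prob_algebraD[OF kpow_meas[OF kern]] by (simp add: measurable_cong_sets[OF sG refl])
  have Bs: "sets (?B t) = sets Sp" for t by (rule sets_bind'[OF g kpow_meas[OF kern]])
  have Bp: "prob_space (?B t)" for t by (rule prob_space_bind'[OF g kpow_meas[OF kern]])
  have Bsp: "space (?B t) = {0..}" for t using sets_eq_imp_space_eq[OF Bs] space_Sp by simp
  have nn: "0 \<le> (\<integral>\<phi>. (\<pi> \<phi> p + b) \<partial>?B t)" for t
    using Bsp bb p by (intro integral_nonneg_AE AE_I2) (smt (verit, ccfv_threshold) atLeast_iff)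
  have "(\<integral>\<^sup>+x. K p x \<partial>\<gamma>) = (\<Sum>t. \<integral>\<^sup>+y. ennreal (\<delta> ^ t) * (\<integral>\<^sup>+\<phi>'. ?f \<phi>' \<partial>kpow \<Gamma> t y) \<partial>\<gamma>)"
    unfolding K_def by (rule nn_integral_suminf[OF Fm])
  also have "\<dots> = (\<Sum>t. ennreal (\<delta> ^ t) * \<integral>\<^sup>+y. (\<integral>\<^sup>+\<phi>'. ?f \<phi>' \<partial>kpow \<Gamma> t y) \<partial>\<gamma>)"
    by (intro suminf_cong nn_integral_cmult Fm2)
  also have "\<dots> = (\<Sum>t. ennreal (\<delta> ^ t * (\<integral>\<phi>. (\<pi> \<phi> p + b) \<partial>?B t)))"
  proof (intro suminf_cong)
    fix t
    interpret prob_space "?B t" by (rule Bp)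
    have "\<integral>\<^sup>+y. (\<integral>\<^sup>+\<phi>'. ?f \<phi>' \<partial>kpow \<Gamma> t y) \<partial>\<gamma> = (\<integral>\<^sup>+\<phi>'. ?f \<phi>' \<partial>?B t)"
      by (rule nn_integral_bind[OF f_meas[OF p] km, symmetric])
    also have "\<dots> = ennreal (\<integral>\<phi>. (\<pi> \<phi> p + b) \<partial>?B t)"
      using i7[of t] Bsp bb p
      by (intro nn_integral_eq_integral) (auto intro!: AE_I2, smt (verit) bb p)
    finally show "ennreal (\<delta> ^ t) * \<integral>\<^sup>+y. (\<integral>\<^sup>+\<phi>'. ?f \<phi>' \<partial>kpow \<Gamma> t y) \<partial>\<gamma> =
        ennreal (\<delta> ^ t * (\<integral>\<phi>. (\<pi> \<phi> p + b) \<partial>?B t))"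
      using d0 nn[of t] by (simp add: ennreal_mult)
  qed
  also have "\<dots> < \<infinity>"
  proof -
    have "summable (\<lambda>t. \<delta> ^ t * (\<integral>\<phi>. \<pi> \<phi> p \<partial>?B t) + b * \<delta> ^ t)"
      using s7 d0 d1 by (intro summable_add summable_mult summable_geometric) auto
    moreover have "\<delta> ^ t * (\<integral>\<phi>. (\<pi> \<phi> p + b) \<partial>?B t) = \<delta> ^ t * (\<integral>\<phi>. \<pi> \<phi> p \<partial>?B t) + b * \<delta> ^ t" for t
    proof -
      interpret prob_space "?B t" by (rule Bp)
      show ?thesis using i7[of t] prob_space by (simp add: algebra_simps)
    qed
    ultimately have "summable (\<lambda>t. \<delta> ^ t * (\<integral>\<phi>. (\<pi> \<phi> p + b) \<partial>?B t))" by simp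
    then show ?thesis using nn d0
      by (simp add: ennreal_suminf_neq_top less_top)
  qed
  finally show ?thesis .
qed

end


lemma cont_slice2:
  fixes f :: "real \<Rightarrow> real \<Rightarrow> 'b::topological_space"
  assumes "continuous_on ({0..} \<times> {0..}) (\<lambda>(x, y). f x y)" "(0::real) \<le> x"
  shows "continuous_on {0..} (\<lambda>p. f x p)"
proof -
  have "continuous_on {0..} ((\<lambda>(x, y). f x y) \<circ> (\<lambda>p::real. (x, p)))"
    by (rule continuous_on_compose[OF continuous_on_Pair[OF continuous_on_const continuous_on_id]])
       (rule continuous_on_subset[OF assms(1)], use assms(2) in auto)
  then show ?thesis by (simp add: o_def)
qed

theorem lemma3:
  fixes D :: "real \<Rightarrow> ereal"
    and \<pi> q :: "real \<Rightarrow> real \<Rightarrow> real"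
    and \<Gamma> :: "real \<Rightarrow> real measure"
    and \<gamma> :: "real measure"
    and r \<beta> c\<^sub>e \<delta> b :: real
    and v :: "real \<Rightarrow> real \<Rightarrow> real"
  assumes
    \<comment> \<open>(A1)\<close>
    A1_cont: "continuous_on {0..} D"
    and A1_dec: "\<And>p p'. 0 \<le> p \<Longrightarrow> p < p' \<Longrightarrow> D p' < D p"
    and A1_0: "D 0 = \<infinity>"
    and A1_lim: "(D \<longlongrightarrow> 0) at_top"
    \<comment> \<open>(A2)\<close>
    and A2_cont_pi: "continuous_on ({0..} \<times> {0..}) (\<lambda>(x, y). \<pi> x y)"
    and A2_cont_q: "continuous_on ({0..} \<times> {0..}) (\<lambda>(x, y). q x y)"
    and A2_incr_pi: "strict_incr2 \<pi>"
    and A2_incr_q: "strict_incr2 q"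
    and A2_q_nonneg: "\<And>\<phi> p. 0 \<le> \<phi> \<Longrightarrow> 0 \<le> p \<Longrightarrow> 0 \<le> q \<phi> p"
    and A2_pi_neg: "\<And>\<phi> p. 0 \<le> \<phi> \<Longrightarrow> 0 \<le> p \<Longrightarrow> \<phi> = 0 \<or> p = 0 \<Longrightarrow> \<pi> \<phi> p < 0"
    \<comment> \<open>(A3)\<close>
    and A3_kernel: "\<Gamma> \<in> Sp \<rightarrow>\<^sub>M prob_algebra Sp"
    and A3_mono: "\<And>a \<phi> \<phi>'. 0 \<le> a \<Longrightarrow> 0 \<le> \<phi> \<Longrightarrow> \<phi> \<le> \<phi>' \<Longrightarrow>
                     measure (\<Gamma> \<phi>') {0..a} \<le> measure (\<Gamma> \<phi>) {0..a}"
    and A3a: "\<And>a \<phi>. 0 < a \<Longrightarrow> 0 \<le> \<phi> \<Longrightarrow> \<exists>n. measure (kpow \<Gamma> n \<phi>) {0..<a} > 0"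
    and A3b: "\<And>p. 0 < p \<Longrightarrow> \<exists>\<phi>\<ge>0. (\<integral>\<phi>'. \<pi> \<phi>' p \<partial>(\<Gamma> \<phi>)) \<ge> 0"
    and r_pos: "0 < r"
    and beta_def: "\<beta> = 1 / (1 + r)"
    \<comment> \<open>(A4)\<close>
    and A4_prob: "\<gamma> \<in> space (prob_algebra Sp)"
    and A4_int: "\<And>p. 0 \<le> p \<Longrightarrow> integrable \<gamma> (\<lambda>\<phi>. q \<phi> p)"
    and A4_pos: "\<And>a. 0 < a \<Longrightarrow> measure \<gamma> {0..a} > 0"
    and ce_pos: "0 < c\<^sub>e"
    \<comment> \<open>(A5)\<close>
    and A5: "\<exists>p>0. (\<integral>\<phi>. \<pi> \<phi> p \<partial>\<gamma>) \<ge> c\<^sub>e"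
    \<comment> \<open>(A6)\<close>
    and A6: "\<And>p. 0 \<le> p \<Longrightarrow> (\<Sum>t. \<beta> ^ t * (\<integral>\<phi>'. \<pi> \<phi>' p \<partial>(kpow \<Gamma> t 0))) \<le> 0"
    \<comment> \<open>(A7): the series of E pi(phi_t,p), phi_0 ~ gamma, is finite\<close>
    and A7_delta: "\<beta> < \<delta>" "\<delta> < 1"
    and A7_int: "\<And>p t. 0 \<le> p \<Longrightarrow> integrable (bind \<gamma> (kpow \<Gamma> t)) (\<lambda>\<phi>. \<pi> \<phi> p)"
    and A7_sum: "\<And>p. 0 \<le> p \<Longrightarrow>
                   summable (\<lambda>t. \<delta> ^ t * (\<integral>\<phi>. \<pi> \<phi> p \<partial>(bind \<gamma> (kpow \<Gamma> t))))"
    \<comment> \<open>the constant b and finiteness of kappa\<close>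
    and b_bound: "\<And>\<phi> p. 0 \<le> \<phi> \<Longrightarrow> 0 \<le> p \<Longrightarrow> \<pi> \<phi> p + b \<ge> 1"
    and kappa_int: "\<And>\<phi> p t. 0 \<le> \<phi> \<Longrightarrow> 0 \<le> p \<Longrightarrow> integrable (kpow \<Gamma> t \<phi>) (\<lambda>\<phi>'. \<pi> \<phi>' p)"
    and kappa_fin: "\<And>\<phi> p. 0 \<le> \<phi> \<Longrightarrow> 0 \<le> p \<Longrightarrow>
                   summable (\<lambda>t. \<delta> ^ t * (\<integral>\<phi>'. (\<pi> \<phi>' p + b) \<partial>(kpow \<Gamma> t \<phi>)))"
    \<comment> \<open>(A8)\<close>
    and A8: "\<And>u. u \<in> Cspace \<Gamma> \<pi> b \<delta> \<Longrightarrow>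
               continuous_on ({0..} \<times> {0..}) (\<lambda>(\<phi>, p). \<integral>\<phi>'. u \<phi>' p \<partial>(\<Gamma> \<phi>))"
    \<comment> \<open>v is the fixed point v* of the Bellman operator in script-C\<close>
    and v_C: "v \<in> Cspace \<Gamma> \<pi> b \<delta>"
    and v_fix: "\<And>\<phi> p. 0 \<le> \<phi> \<Longrightarrow> 0 \<le> p \<Longrightarrow> bellman \<Gamma> \<pi> \<beta> v \<phi> p = v \<phi> p"
  shows "\<exists>!p. 0 < p \<and> (\<integral>\<phi>. v \<phi> p \<partial>\<gamma>) = c\<^sub>e"
proof -
  have beta0: "0 < \<beta>" using beta_def r_pos by simp
  have d0: "0 < \<delta>" using beta0 A7_delta by simp
  interpret kset \<Gamma> \<pi> b \<delta>
    using A3_kernel A2_cont_pi b_bound kappa_int kappa_fin d0 by unfold_locales auto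
  define g where "g p = (\<integral>\<phi>. v \<phi> p \<partial>\<gamma>)" for p
  have sg: "sets \<gamma> = sets Sp" and pg: "prob_space \<gamma>" using A4_prob by (auto simp: space_prob_algebra)
  have spg: "space \<gamma> = {0..}" using sets_eq_imp_space_eq[OF sg] space_Sp by simp
  have vc: "continuous_on ({0..} \<times> {0..}) (\<lambda>(x, y). v x y)" and vi: "incr2 v"
    using v_C by (auto simp: Cspace_def)
  obtain M where Mb: "\<And>\<phi> p. 0 \<le> \<phi> \<Longrightarrow> 0 \<le> p \<Longrightarrow> \<bar>v \<phi> p\<bar> \<le> M * kappa \<Gamma> \<pi> b \<delta> \<phi> p"
    using v_C by (auto simp: Cspace_def)
  have vm: "0 \<le> p \<Longrightarrow> (\<lambda>\<phi>. v \<phi> p) \<in> borel_measurable Sp" for p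
    by (rule cont_meas_Sp, rule cont_slice[OF vc])
  have intg: "integrable \<gamma> (\<lambda>\<phi>. v \<phi> p)" if p: "0 \<le> p" for p
  proof -
    have fin: "(\<integral>\<^sup>+x. K p x \<partial>\<gamma>) < \<infinity>"
      by (rule K_gamma[OF A4_prob p A7_delta(2)]) (use A7_int A7_sum p in auto)
    have bd: "\<And>\<phi>. 0 \<le> \<phi> \<Longrightarrow> \<bar>v \<phi> p\<bar> \<le> M * kappa \<Gamma> \<pi> b \<delta> \<phi> p" using Mb p by blast
    show ?thesis by (rule integrable_K[OF sg fin p vm[OF p] bd])
  qed
  have finG: "(\<integral>\<^sup>+x. K p x \<partial>\<Gamma> \<phi>) < \<infinity>" if "0 \<le> \<phi>" "0 \<le> p" for \<phi> p
  proof -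
    have "ennreal \<delta> * (\<integral>\<^sup>+x. K p x \<partial>\<Gamma> \<phi>) \<le> K p \<phi>"
      using K_Gamma[of \<phi> p] that by (simp add: space_Sp)
    also have "K p \<phi> < \<top>" using K_eq[OF that] by simp
    finally have "ennreal \<delta> * (\<integral>\<^sup>+x. K p x \<partial>\<Gamma> \<phi>) < \<top>" .
    then show ?thesis using d0 by (auto simp add: ennreal_mult_less_top)
  qed
  have intG: "integrable (\<Gamma> \<phi>) (\<lambda>\<phi>'. v \<phi>' p)" if "0 \<le> \<phi>" "0 \<le> p" for \<phi> p
  proof -
    have bd: "\<And>\<phi>. 0 \<le> \<phi> \<Longrightarrow> \<bar>v \<phi> p\<bar> \<le> M * kappa \<Gamma> \<pi> b \<delta> \<phi> p" using Mb that by blast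
    show ?thesis by (rule integrable_K[OF Gam_sets finG[OF that] that(2) vm[OF that(2)] bd]) (use that in \<open>simp add: space_Sp\<close>)
  qed
  have spG: "space (\<Gamma> \<phi>) = {0..}" if "0 \<le> \<phi>" for \<phi>
    using sets_eq_imp_space_eq[OF Gam_sets, of \<phi>] space_Sp that by simp
  have incr: "v x p \<le> v x' p'" if "0 \<le> x" "x \<le> x'" "0 \<le> p" "p \<le> p'" for x x' p p'
    using vi that unfolding incr2_def by blast
  have Ile: "(\<integral>y. v y p \<partial>\<Gamma> \<phi>) \<le> (\<integral>y. v y p' \<partial>\<Gamma> \<phi>)" if "0 \<le> \<phi>" "0 \<le> p" "p \<le> p'" for \<phi> p p'
    by (rule integral_mono[OF intG[OF that(1,2)] intG[OF that(1)]])
       (use that spG[OF that(1)] incr in auto)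
  have vfix: "v \<phi> p = \<pi> \<phi> p + \<beta> * max 0 (\<integral>y. v y p \<partial>\<Gamma> \<phi>)" if "0 \<le> \<phi>" "0 \<le> p" for \<phi> p
    using v_fix[OF that] by (simp add: bellman_def)
  have vstrict: "v \<phi> p < v \<phi> p'" if "0 \<le> \<phi>" "0 \<le> p" "p < p'" for \<phi> p p'
  proof -
    have "\<pi> \<phi> p < \<pi> \<phi> p'" using A2_incr_pi that unfolding strict_incr2_def by auto
    moreover have "\<beta> * max 0 (\<integral>y. v y p \<partial>\<Gamma> \<phi>) \<le> \<beta> * max 0 (\<integral>y. v y p' \<partial>\<Gamma> \<phi>)"
      using Ile[of \<phi> p p'] that beta0 by (intro mult_left_mono) auto
    ultimately show ?thesis using vfix[OF that(1,2)] vfix[of \<phi> p'] that by simp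
  qed
  have vpi: "\<pi> \<phi> p \<le> v \<phi> p" if "0 \<le> \<phi>" "0 \<le> p" for \<phi> p
    using vfix[OF that] beta0 by simp
  define c where "c n = max M 0 * (\<beta> / \<delta>) ^ n" for n
  have c0: "0 \<le> c n" for n using beta0 d0 by (simp add: c_def)
  have cstep: "\<forall>\<phi>\<ge>0. max 0 (v \<phi> 0) \<le> c n * kappa \<Gamma> \<pi> b \<delta> \<phi> 0" for n
  proof (induction n)
    case 0
    show ?case
    proof (intro allI impI)
      fix \<phi> :: real assume h: "0 \<le> \<phi>"
      have "max 0 (v \<phi> 0) \<le> M * kappa \<Gamma> \<pi> b \<delta> \<phi> 0" using Mb[OF h order_refl] kappa_nonneg[OF h order_refl]
        by (smt (verit) mult_nonneg_nonneg)
      also have "\<dots> \<le> c 0 * kappa \<Gamma> \<pi> b \<delta> \<phi> 0" using kappa_nonneg[OF h order_refl]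
        by (simp add: c_def mult_right_mono)
      finally show "max 0 (v \<phi> 0) \<le> c 0 * kappa \<Gamma> \<pi> b \<delta> \<phi> 0" .
    qed
  next
    case (Suc n)
    show ?case
    proof (intro allI impI)
      fix \<phi> :: real assume h: "0 \<le> \<phi>"
      let ?w = "\<lambda>x. max 0 (v x 0)"
      let ?I = "\<integral>y. v y 0 \<partial>\<Gamma> \<phi>"
      let ?J = "\<integral>y. ?w y \<partial>\<Gamma> \<phi>"
      have sGam: "sets (\<Gamma> \<phi>) = sets Sp" using Gam_sets h space_Sp by simp
      have wint: "integrable (\<Gamma> \<phi>) ?w" using intG[OF h order_refl] by auto
      have IJ: "?I \<le> ?J" by (rule integral_mono[OF intG[OF h order_refl] wint]) auto
      have J0: "0 \<le> ?J" by (rule integral_nonneg_AE) auto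
      have eJ: "(\<integral>\<^sup>+y. ennreal (?w y) \<partial>\<Gamma> \<phi>) = ennreal ?J"
        by (rule nn_integral_eq_integral[OF wint]) auto
      have "(\<integral>\<^sup>+y. ennreal (?w y) \<partial>\<Gamma> \<phi>) \<le> (\<integral>\<^sup>+y. ennreal (c n) * K 0 y \<partial>\<Gamma> \<phi>)"
      proof (rule nn_integral_mono)
        fix y assume "y \<in> space (\<Gamma> \<phi>)"
        then have y: "0 \<le> y" using spG[OF h] by auto
        have "ennreal (?w y) \<le> ennreal (c n * kappa \<Gamma> \<pi> b \<delta> y 0)"
          using Suc.IH y by (intro ennreal_leI) auto
        also have "\<dots> = ennreal (c n) * K 0 y"
          using K_eq[OF y order_refl] kappa_nonneg[OF y order_refl] c0 by (simp add: ennreal_mult)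
        finally show "ennreal (?w y) \<le> ennreal (c n) * K 0 y" .
      qed
      also have "\<dots> = ennreal (c n) * (\<integral>\<^sup>+y. K 0 y \<partial>\<Gamma> \<phi>)"
        by (rule nn_integral_cmult) (use K_meas[OF order_refl] in \<open>simp add: measurable_cong_sets[OF sGam refl]\<close>)
      finally have "ennreal \<delta> * ennreal ?J \<le> ennreal \<delta> * (ennreal (c n) * (\<integral>\<^sup>+y. K 0 y \<partial>\<Gamma> \<phi>))"
        unfolding eJ by (rule mult_left_mono) simp
      also have "\<dots> = ennreal (c n) * (ennreal \<delta> * (\<integral>\<^sup>+y. K 0 y \<partial>\<Gamma> \<phi>))" by (simp add: ac_simps)
      also have "\<dots> \<le> ennreal (c n) * K 0 \<phi>"
        using K_Gamma[of \<phi> 0] h by (intro mult_left_mono) (auto simp: space_Sp)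
      also have "\<dots> = ennreal (c n * kappa \<Gamma> \<pi> b \<delta> \<phi> 0)"
        using K_eq[OF h order_refl] kappa_nonneg[OF h order_refl] c0 by (simp add: ennreal_mult)
      finally have "ennreal (\<delta> * ?J) \<le> ennreal (c n * kappa \<Gamma> \<pi> b \<delta> \<phi> 0)"
        using d0 J0 by (simp add: ennreal_mult)
      then have dJ: "\<delta> * ?J \<le> c n * kappa \<Gamma> \<pi> b \<delta> \<phi> 0"
        using kappa_nonneg[OF h order_refl] c0 by (simp add: ennreal_le_iff)
      have "v \<phi> 0 \<le> \<beta> * max 0 ?I"
        using vfix[OF h order_refl] A2_pi_neg[OF h order_refl] by simp
      also have "\<dots> \<le> \<beta> * ?J" using IJ J0 beta0 by (intro mult_left_mono) auto
      also have "\<dots> = (\<beta> / \<delta>) * (\<delta> * ?J)" using d0 by simp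
      also have "\<dots> \<le> (\<beta> / \<delta>) * (c n * kappa \<Gamma> \<pi> b \<delta> \<phi> 0)"
        using dJ beta0 d0 by (intro mult_left_mono) auto
      also have "\<dots> = c (Suc n) * kappa \<Gamma> \<pi> b \<delta> \<phi> 0" by (simp add: c_def ac_simps)
      finally show "max 0 (v \<phi> 0) \<le> c (Suc n) * kappa \<Gamma> \<pi> b \<delta> \<phi> 0"
        using c0 kappa_nonneg[OF h order_refl] by simp
    qed
  qed
  have v0: "v \<phi> 0 \<le> 0" if h: "0 \<le> \<phi>" for \<phi>
  proof -
    have "(\<lambda>n. max M 0 * (\<beta> / \<delta>) ^ n * kappa \<Gamma> \<pi> b \<delta> \<phi> 0) \<longlonglongrightarrow> max M 0 * 0 * kappa \<Gamma> \<pi> b \<delta> \<phi> 0"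
      using beta0 A7_delta d0 by (intro tendsto_intros) auto
    then have lim: "(\<lambda>n. max M 0 * (\<beta> / \<delta>) ^ n * kappa \<Gamma> \<pi> b \<delta> \<phi> 0) \<longlonglongrightarrow> 0" by simp
    have "max 0 (v \<phi> 0) \<le> 0"
      by (rule LIMSEQ_le_const[OF lim]) (use cstep h in \<open>auto simp: c_def\<close>)
    then show ?thesis by simp
  qed
  obtain p1 where p1: "0 < p1" "(\<integral>\<phi>. \<pi> \<phi> p1 \<partial>\<gamma>) \<ge> c\<^sub>e" using A5 by blast
  have intpi: "integrable \<gamma> (\<lambda>\<phi>. \<pi> \<phi> p1)"
  proof -
    have "bind \<gamma> (kpow \<Gamma> 0) = \<gamma>"
      using bind_return''[OF sg] by (simp add: fun_eq_iff)
    then show ?thesis using A7_int[of p1 0] p1 by simp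
  qed
  have gp1: "c\<^sub>e \<le> g p1"
  proof -
    have "(\<integral>\<phi>. \<pi> \<phi> p1 \<partial>\<gamma>) \<le> g p1" unfolding g_def
      by (rule integral_mono[OF intpi intg]) (use p1 spg vpi in auto)
    then show ?thesis using p1 by simp
  qed
  have g0: "g 0 \<le> 0"
  proof -
    have "g 0 \<le> (\<integral>\<phi>. 0 \<partial>\<gamma>)" unfolding g_def
      by (rule integral_mono[OF intg]) (use spg v0 in auto)
    then show ?thesis by simp
  qed
  have gcont: "continuous_on {0..p1} g"
  proof (rule continuous_on_sequentiallyI)
    fix u a assume u: "\<forall>n. u n \<in> {0..p1}" and a: "a \<in> {0..p1}" and ua: "u \<longlonglongrightarrow> a"
    show "(\<lambda>n. g (u n)) \<longlonglongrightarrow> g a" unfolding g_def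
    proof (rule integral_dominated_convergence[where w="\<lambda>\<phi>. \<bar>v \<phi> 0\<bar> + \<bar>v \<phi> p1\<bar>"])
      show "(\<lambda>\<phi>. v \<phi> a) \<in> borel_measurable \<gamma>"
        using vm[of a] a by (simp add: measurable_cong_sets[OF sg refl])
      show "(\<lambda>\<phi>. v \<phi> (u n)) \<in> borel_measurable \<gamma>" for n
        using vm[of "u n"] u by (simp add: measurable_cong_sets[OF sg refl])
      show "integrable \<gamma> (\<lambda>\<phi>. \<bar>v \<phi> 0\<bar> + \<bar>v \<phi> p1\<bar>)"
        using intg[of 0] intg[of p1] p1 by auto
      show "AE x in \<gamma>. (\<lambda>n. v x (u n)) \<longlonglongrightarrow> v x a"
      proof (rule AE_I2)
        fix x assume "x \<in> space \<gamma>"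
        then have x: "0 \<le> x" using spg by auto
        show "(\<lambda>n. v x (u n)) \<longlonglongrightarrow> v x a"
          by (rule continuous_on_tendsto_compose[OF cont_slice2[OF vc x] ua]) (use a u in auto)
      qed
      show "AE x in \<gamma>. norm (v x (u n)) \<le> \<bar>v x 0\<bar> + \<bar>v x p1\<bar>" for n
      proof (rule AE_I2)
        fix x assume "x \<in> space \<gamma>"
        then have x: "0 \<le> x" using spg by auto
        have "v x 0 \<le> v x (u n)" "v x (u n) \<le> v x p1" using incr[of x x] x u by auto
        then show "norm (v x (u n)) \<le> \<bar>v x 0\<bar> + \<bar>v x p1\<bar>" by auto
      qed
    qed
  qed
  obtain p where p: "0 \<le> p" "p \<le> p1" "g p = c\<^sub>e"
    using IVT'[of g 0 c\<^sub>e p1] g0 ce_pos gp1 p1 gcont by force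
  have pp: "0 < p" using p g0 ce_pos by (cases "p = 0") auto
  show ?thesis
  proof (rule ex1I[where a=p])
    show "0 < p \<and> (\<integral>\<phi>. v \<phi> p \<partial>\<gamma>) = c\<^sub>e" using pp p by (simp add: g_def)
  next
    fix q assume q: "0 < q \<and> (\<integral>\<phi>. v \<phi> q \<partial>\<gamma>) = c\<^sub>e"
    interpret pg: prob_space \<gamma> by (rule pg)
    have lt: "g x < g y" if "0 \<le> x" "x < y" for x y
      unfolding g_def
      by (rule pg.integral_less_AE_space[OF intg[OF that(1)] intg]) (use that spg vstrict pg.emeasure_space_1 in \<open>auto intro!: AE_I2\<close>)
    show "q = p"
    proof (rule ccontr)
      assume "q \<noteq> p"
      then have "q < p \<or> p < q" by auto
      then show False using lt[of q p] lt[of p q] q pp p by (auto simp: g_def)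
    qed
  qed
qed


end
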